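(* Let $\delta\in[1/3,1]$, let $\nu_-,\nu_+>0$ be fixed constants and $a_\pm=\left(\frac{(1+\delta^2)\delta}{8\nu_\pm^2}\right)^{2/5}$. Consider the fourth-order ODE $$\frac{d^{4}\overline{A_0}}{dz^{4}}=-\overline{A_0}\,(\overline{A_0}^{2}+z)$$ with data at $z=a_+$ given, for a parameter $(\overline{x_{10}},\overline{x_{20}})\in\mathbb{R}^2$, by $$\overline{A_0}=a_+^{1/2}\overline{x_{10}},\quad \overline{A_0}'=-\frac{a_+^{3/4}}{\sqrt2}(\overline{x_{10}}+\overline{x_{20}}),\quad \overline{A_0}''=a_+\overline{x_{20}},\quad \overline{A_0}'''=\frac{a_+^{5/4}}{\sqrt2}(\overline{x_{10}}-\overline{x_{20}}).$$ Then for $k_1>0$ small enough and $|(\overline{x_{10}},\overline{x_{20}})|\le k_1$, the corresponding solutions exist on the whole interval $z\in[-a_-,a_+]$, forming a 2-parameter family (parameter $(\overline{x_{10}},\overline{x_{20}})$); these solutions depend analytically on $\delta\in[1/3,1]$. *)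

theory Defs
  imports "HOL-Analysis.Analysis"
begin

definition a_scale :: "real \<Rightarrow> real \<Rightarrow> real" where
  "a_scale \<delta> \<nu> = ((1 + \<delta>\<^sup>2) * \<delta> / (8 * \<nu>\<^sup>2)) powr (2/5)"

definition solves_on :: "(real \<Rightarrow> real) \<Rightarrow> (real \<Rightarrow> real) \<Rightarrow> (real \<Rightarrow> real)
    \<Rightarrow> (real \<Rightarrow> real) \<Rightarrow> real set \<Rightarrow> bool" where
  "solves_on A A1 A2 A3 I \<longleftrightarrow>
     (\<forall>z\<in>I. (A has_real_derivative A1 z) (at z within I)
          \<and> (A1 has_real_derivative A2 z) (at z within I)
          \<and> (A2 has_real_derivative A3 z) (at z within I)
          \<and> (A3 has_real_derivative (- A z * ((A z)\<^sup>2 + z))) (at z within I))"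

definition real_analytic_at :: "(real \<Rightarrow> real) \<Rightarrow> real \<Rightarrow> bool" where
  "real_analytic_at f x0 \<longleftrightarrow>
     (\<exists>r>0. \<exists>c::nat \<Rightarrow> real. \<forall>y. \<bar>y - x0\<bar> < r \<longrightarrow> (\<lambda>n. c n * (y - x0) ^ n) sums f y)"

end

theory Submission
  imports Defs "HOL-Complex_Analysis.Complex_Analysis"
begin

function coef :: "'a::real_normed_field \<Rightarrow> 'a \<Rightarrow> 'a \<Rightarrow> 'a \<Rightarrow> 'a \<Rightarrow> nat \<Rightarrow> 'a" where
"coef p d0 d1 d2 d3 n = (if n = 0 then d0 else if n = 1 then d1 else if n = 2 then d2 else if n = 3 then d3 else
  - ((\<Sum>i\<le>n-4. coef p d0 d1 d2 d3 i * (\<Sum>j\<le>n-4-i. coef p d0 d1 d2 d3 j * coef p d0 d1 d2 d3 (n-4-i-j)))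
     + p * coef p d0 d1 d2 d3 (n-4) + (if n = 4 then 0 else coef p d0 d1 d2 d3 (n-5)))
   / of_nat ((n-3)*(n-2)*(n-1)*n))"
  by pat_completeness auto
termination by (relation "Wellfounded.measure (\<lambda>(p,d0,d1,d2,d3,n). n)") auto

declare coef.simps[simp del]

definition cube :: "(nat \<Rightarrow> 'a::real_normed_field) \<Rightarrow> nat \<Rightarrow> 'a" where
  "cube c n = (\<Sum>i\<le>n. c i * (\<Sum>j\<le>n-i. c j * c (n-i-j)))"

lemma coef_0: "coef p d0 d1 d2 d3 0 = d0" by (simp add: coef.simps)
lemma coef_1: "coef p d0 d1 d2 d3 1 = d1" by (subst coef.simps) simp
lemma coef_2: "coef p d0 d1 d2 d3 2 = d2" by (subst coef.simps) simp
lemma coef_3: "coef p d0 d1 d2 d3 3 = d3" by (subst coef.simps) simp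

lemma coef_4: "coef p d0 d1 d2 d3 (n+4) =
  - (cube (coef p d0 d1 d2 d3) n + p * coef p d0 d1 d2 d3 n + (if n = 0 then 0 else coef p d0 d1 d2 d3 (n-1)))
   / of_nat ((n+1)*(n+2)*(n+3)*(n+4))"
proof -
  have e: "(n+4-3)*(n+4-2)*(n+4-1)*(n+4) = (n+1)*(n+2)*(n+3)*(n+4)" by simp
  show ?thesis
    apply (subst coef.simps)
    apply (simp only: e cube_def)
    apply (simp add: numeral_eq_Suc)
    done
qed

lemma g_step:
  fixes \<rho> \<Lambda> :: real
  assumes "\<rho> \<ge> 1" "\<Lambda> \<ge> 1" "k \<le> n"
  shows "\<Lambda>^(min n N)/\<rho>^n \<ge> (\<Lambda>^(min k N)/\<rho>^k)/\<rho>^(n-k) * (if k < N \<and> k < n then \<Lambda> else 1)"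
proof -
  have a: "\<Lambda>^(min k N) * (if k < N \<and> k < n then \<Lambda> else 1) \<le> \<Lambda>^(min n N)"
  proof (cases "k < N \<and> k < n")
    case True
    then have "\<Lambda>^(min k N) * \<Lambda> = \<Lambda>^(Suc (min k N))" by simp
    also have "\<dots> \<le> \<Lambda>^(min n N)" using True assms by (intro power_increasing) auto
    finally show ?thesis using True by simp
  next
    case False
    then show ?thesis using assms by (auto intro: power_increasing)
  qed
  have r: "\<rho>^n = \<rho>^k * \<rho>^(n-k)" using assms by (simp flip: power_add)
  have "(\<Lambda>^(min k N)/\<rho>^k)/\<rho>^(n-k) * (if k < N \<and> k < n then \<Lambda> else 1)
      = (\<Lambda>^(min k N) * (if k < N \<and> k < n then \<Lambda> else 1)) / \<rho>^n" by (simp add: r)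
  also have "\<dots> \<le> \<Lambda>^(min n N)/\<rho>^n" using a assms by (intro divide_right_mono) auto
  finally show ?thesis .
qed

lemma coef_bound:
  fixes p d0 d1 d2 d3 :: "'a::real_normed_field"
  assumes rho: "\<rho> \<ge> 1" and Lam: "\<Lambda> \<ge> 1" and p: "norm p \<le> \<alpha>"
  and T1: "3*\<rho>^5*(\<alpha>+1) \<le> \<Lambda>" and T2: "3*\<rho>^5*(\<alpha>+1) \<le> real N"
  and Cs: "3*C^2*\<Lambda>^(3*N)*\<rho>^4 \<le> 1" and C0: "C \<ge> 0"
  and d: "norm d0 \<le> C/\<rho>^3" "norm d1 \<le> C/\<rho>^3" "norm d2 \<le> C/\<rho>^3" "norm d3 \<le> C/\<rho>^3"
  shows "norm (coef p d0 d1 d2 d3 n) \<le> C * (\<Lambda>^(min n N) / \<rho>^n)"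
proof (induction n rule: less_induct)
  case (less n)
  define c where "c = coef p d0 d1 d2 d3"
  define g where "g = (\<lambda>n. \<Lambda>^(min n N) / \<rho>^n)"
  have IH: "\<And>i. i < n \<Longrightarrow> norm (c i) \<le> C * g i" using less by (simp add: c_def g_def)
  have al: "\<alpha> \<ge> 0" using p norm_ge_zero order_trans by blast
  have gpos: "g k > 0" for k using rho Lam by (simp add: g_def)
  have glow: "g k \<ge> 1/\<rho>^k" for k
    unfolding g_def using rho Lam by (intro divide_right_mono) (auto simp: one_le_power)
  have ghigh: "g k \<le> \<Lambda>^N / \<rho>^k" for k
    unfolding g_def using rho Lam by (intro divide_right_mono power_increasing) auto
  have gstep: "k \<le> j \<Longrightarrow> g j \<ge> g k / \<rho>^(j-k) * (if k < N \<and> k < j then \<Lambda> else 1)" for k j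
    unfolding g_def using g_step[OF rho Lam] by blast
  show ?case
  proof (cases "n < 4")
    case True
    then have "n = 0 \<or> n = 1 \<or> n = 2 \<or> n = 3" by auto
    then have "norm (c n) \<le> C/\<rho>^3"
      using d by (auto simp: c_def coef_0 coef_1 coef_1[unfolded One_nat_def] coef_2 coef_3)
    also have "C/\<rho>^3 \<le> C * g n"
    proof -
      have "1/\<rho>^3 \<le> 1/\<rho>^n" using True rho
        by (intro divide_left_mono power_increasing) auto
      also have "\<dots> \<le> g n" by (rule glow)
      finally show ?thesis using C0 by (simp add: mult_left_mono divide_inverse)
    qed
    finally show ?thesis by (simp add: c_def g_def)
  next
    case False
    then obtain m where n: "n = m+4" by (metis add.commute le_Suc_ex not_less)
    define P where "P = real ((m+1)*(m+2)*(m+3)*(m+4))"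
    have P1: "P \<ge> (m+1)^2" "P \<ge> m+1" "P \<ge> 1" "P > 0"
    proof -
      have a: "(m+1)*(m+1) \<le> (m+1)*(m+2)*(m+3)*(m+4)" by (simp add: algebra_simps)
      have b: "m+1 \<le> (m+1)*(m+2)*(m+3)*(m+4)" by (simp add: algebra_simps)
      have c: "(real m + 1)^2 = real ((m+1)*(m+1))" by (simp add: power2_eq_square algebra_simps)
      show "P \<ge> (m+1)^2" unfolding P_def of_nat_le_iff using a by (simp add: power2_eq_square)
      show "P \<ge> m+1" unfolding P_def using b by (metis of_nat_1 of_nat_add of_nat_le_iff)
      then show "P \<ge> 1" by simp
      then show "P > 0" by simp
    qed
    have tri: "norm (c i * (c j * c k)) \<le> C^3*\<Lambda>^(3*N)/\<rho>^m" if "i+j+k = m" for i j k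
    proof -
      have "norm (c i * (c j * c k)) = norm (c i) * (norm (c j) * norm (c k))"
        by (simp add: norm_mult)
      also have "\<dots> \<le> (C * (\<Lambda>^N / \<rho>^i)) * ((C * (\<Lambda>^N / \<rho>^j)) * (C * (\<Lambda>^N / \<rho>^k)))"
      proof -
        have b: "norm (c l) \<le> C * (\<Lambda>^N / \<rho>^l)" if "l \<le> m" for l
        proof -
          have "norm (c l) \<le> C * g l" using IH[of l] that n by simp
          also have "\<dots> \<le> C * (\<Lambda>^N / \<rho>^l)" using ghigh[of l] C0 by (rule mult_left_mono)
          finally show ?thesis .
        qed
        have nn: "0 \<le> C * (\<Lambda>^N / \<rho>^l)" for l using C0 rho Lam by simp
        show ?thesis using b[of i] b[of j] b[of k] that nn
          by (intro mult_mono) (auto intro: mult_nonneg_nonneg)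
      qed
      also have "\<dots> = C^3*\<Lambda>^(3*N)/\<rho>^m"
      proof -
        have r: "\<rho>^m = \<rho>^i*\<rho>^j*\<rho>^k" unfolding that[symmetric] by (simp add: power_add)
        have l: "\<Lambda>^(3*N) = \<Lambda>^N*\<Lambda>^N*\<Lambda>^N"
          by (simp add: power_mult[symmetric] mult.commute[of 3 N] power3_eq_cube)
             (simp add: power_mult power3_eq_cube)
        show ?thesis unfolding r l by (simp add: power3_eq_cube mult_ac)
      qed
      finally show ?thesis .
    qed
    have cb: "norm (cube c m) \<le> (m+1)^2 * (C^3*\<Lambda>^(3*N)/\<rho>^m)"
    proof -
      have "norm (cube c m) \<le> (\<Sum>i\<le>m. \<Sum>j\<le>m-i. norm (c i * (c j * c (m-i-j))))"
        unfolding cube_def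
        by (rule order_trans[OF norm_sum sum_mono]) (simp add: sum_distrib_left norm_sum)
      also have "\<dots> \<le> (\<Sum>i\<le>m. \<Sum>j\<le>m. C^3*\<Lambda>^(3*N)/\<rho>^m)"
      proof (rule sum_mono)
        fix i assume i: "i \<in> {..m}"
        have "(\<Sum>j\<le>m-i. norm (c i * (c j * c (m-i-j)))) \<le> (\<Sum>j\<le>m-i. C^3*\<Lambda>^(3*N)/\<rho>^m)"
          using i by (intro sum_mono tri) auto
        also have "\<dots> \<le> (\<Sum>j\<le>m. C^3*\<Lambda>^(3*N)/\<rho>^m)"
          using C0 rho Lam by (intro sum_mono2) auto
        finally show "(\<Sum>j\<le>m-i. norm (c i * (c j * c (m-i-j)))) \<le> (\<Sum>j\<le>m. C^3*\<Lambda>^(3*N)/\<rho>^m)" .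
      qed
      also have "\<dots> = (m+1)^2 * (C^3*\<Lambda>^(3*N)/\<rho>^m)" by (simp add: power2_eq_square algebra_simps)
      finally show ?thesis .
    qed
    have gn: "g n \<ge> 1/\<rho>^n" by (rule glow)
    have t1: "3*norm (cube c m) \<le> P * (C * g n)"
    proof -
      have "3*norm (cube c m) \<le> 3*((m+1)^2 * (C^3*\<Lambda>^(3*N)/\<rho>^m))" using cb by simp
      also have "\<dots> = (m+1)^2 * C * (3*C^2*\<Lambda>^(3*N)*\<rho>^4) / \<rho>^n"
        using rho by (simp add: n power_add field_simps power3_eq_cube power2_eq_square)
      also have "\<dots> \<le> (m+1)^2 * C * 1 / \<rho>^n"
        using Cs C0 rho by (intro divide_right_mono mult_left_mono) auto
      also have "\<dots> \<le> P * C * (1/\<rho>^n)"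
        using P1 C0 rho by (simp, intro divide_right_mono mult_right_mono) auto
      also have "\<dots> \<le> P * C * g n" using gn P1 C0 by (intro mult_left_mono) auto
      finally show ?thesis by simp
    qed
    have e1: "3*\<alpha>*\<rho>^4 \<le> 3*\<rho>^5*(\<alpha>+1)"
    proof -
      have "\<rho>^4 \<le> \<rho>^5" using rho by (intro power_increasing) auto
      then have "\<alpha>*\<rho>^4 \<le> (\<alpha>+1)*\<rho>^5" using al rho by (intro mult_mono) auto
      then show ?thesis by (simp add: mult.commute)
    qed
    have t2: "3*(\<alpha> * norm (c m)) \<le> P * (C * g n)"
    proof -
      have s: "g n \<ge> g m / \<rho>^4 * (if m < N then \<Lambda> else 1)"
        using gstep[of m n] by (simp add: n)
      have f: "3*\<alpha>*\<rho>^4 \<le> P * (if m < N then \<Lambda> else 1)"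
      proof (cases "m < N")
        case True
        have "3*\<alpha>*\<rho>^4 \<le> 3*\<rho>^5*(\<alpha>+1)"
          by (rule e1)
        also have "\<dots> \<le> \<Lambda>" by (rule T1)
        also have "\<dots> \<le> P * \<Lambda>" using P1 Lam by simp
        finally show ?thesis using True by simp
      next
        case False
        have "3*\<alpha>*\<rho>^4 \<le> 3*\<rho>^5*(\<alpha>+1)"
          by (rule e1)
        also have "\<dots> \<le> real N" by (rule T2)
        also have "\<dots> \<le> P" using P1 False by linarith
        finally show ?thesis using False by simp
      qed
      have "3*(\<alpha> * norm (c m)) \<le> 3*(\<alpha> * (C * g m))" using IH[of m] n al by (simp add: mult_left_mono)
      also have "\<dots> = C * (3*\<alpha>*\<rho>^4) * (g m / \<rho>^4)" using rho by simp
      also have "\<dots> \<le> C * (P * (if m < N then \<Lambda> else 1)) * (g m / \<rho>^4)"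
        using f C0 gpos[of m] rho by (intro mult_right_mono mult_left_mono) auto
      also have "\<dots> = P * C * (g m / \<rho>^4 * (if m < N then \<Lambda> else 1))" by simp
      also have "\<dots> \<le> P * C * g n" using s P1 C0 by (intro mult_left_mono) auto
      finally show ?thesis by simp
    qed
    have t3: "3*norm (if m = 0 then 0 else c (m-1)) \<le> P * (C * g n)"
    proof (cases "m = 0")
      case True then show ?thesis using P1 C0 gpos[of n] by simp
    next
      case False
      have s: "g n \<ge> g (m-1) / \<rho>^5 * (if m-1 < N then \<Lambda> else 1)"
      proof -
        have h: "n - (m-1) = 5" "m - 1 \<le> n" "m - 1 < n" using False n by auto
        show ?thesis using gstep[OF h(2)] h(1,3) by simp
      qed
      have f: "3*\<rho>^5 \<le> P * (if m-1 < N then \<Lambda> else 1)"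
      proof (cases "m-1 < N")
        case True
        have "3*\<rho>^5 \<le> 3*\<rho>^5*(\<alpha>+1)" using rho al by simp
        also have "\<dots> \<le> \<Lambda>" by (rule T1)
        also have "\<dots> \<le> P * \<Lambda>" using P1 Lam by simp
        finally show ?thesis using True by simp
      next
        case F: False
        have "3*\<rho>^5 \<le> 3*\<rho>^5*(\<alpha>+1)" using rho al by simp
        also have "\<dots> \<le> real N" by (rule T2)
        also have "\<dots> \<le> P" using P1 F by linarith
        finally show ?thesis using F by simp
      qed
      have "3*norm (c (m-1)) \<le> 3*(C * g (m-1))" using IH[of "m-1"] n by simp
      also have "\<dots> = C * (3*\<rho>^5) * (g (m-1) / \<rho>^5)" using rho by simp
      also have "\<dots> \<le> C * (P * (if m-1 < N then \<Lambda> else 1)) * (g (m-1) / \<rho>^5)"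
        using f C0 gpos[of "m-1"] rho by (intro mult_right_mono mult_left_mono) auto
      also have "\<dots> = P * C * (g (m-1) / \<rho>^5 * (if m-1 < N then \<Lambda> else 1))" by simp
      also have "\<dots> \<le> P * C * g n" using s P1 C0 by (intro mult_left_mono) auto
      finally show ?thesis using False by simp
    qed
    have "norm (c n) = norm (cube c m + p * c m + (if m = 0 then 0 else c (m-1))) / P"
      unfolding c_def n coef_4 P_def by (simp only: norm_divide norm_minus_cancel norm_of_nat)
    also have "\<dots> \<le> (norm (cube c m) + \<alpha> * norm (c m) + norm (if m = 0 then 0 else c (m-1))) / P"
    proof (intro divide_right_mono)
      show "norm (cube c m + p * c m + (if m = 0 then 0 else c (m-1)))
          \<le> norm (cube c m) + \<alpha> * norm (c m) + norm (if m = 0 then 0 else c (m-1))"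
        using p by (smt (verit) norm_triangle_ineq norm_mult mult_right_mono norm_ge_zero)
    qed (use P1 in auto)
    also have "\<dots> \<le> C * g n"
    proof -
      have "norm (cube c m) + \<alpha> * norm (c m) + norm (if m = 0 then 0 else c (m-1)) \<le> P * (C * g n)"
        using t1 t2 t3 by linarith
      then show ?thesis using P1(4) by (simp add: divide_le_eq mult.commute)
    qed
    finally show ?thesis by (simp add: c_def g_def)
  qed
qed

lemma term_bound:
  fixes c :: "nat \<Rightarrow> 'a::real_normed_field"
  assumes bound: "\<And>n. norm (c n) \<le> C * (\<Lambda>^(min n N)/\<rho>^n)" and C0: "C \<ge> 0" and L: "\<Lambda> \<ge> 1"
    and rho: "\<rho> > 0" and w: "norm w \<le> K"
  shows "norm (c n * w^n) \<le> C * \<Lambda>^N * (K/\<rho>)^n"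
proof -
  have K0: "K \<ge> 0" using w norm_ge_zero order_trans by blast
  have "norm (c n * w^n) = norm (c n) * norm w ^ n" by (simp add: norm_mult norm_power)
  also have "\<dots> \<le> (C * (\<Lambda>^(min n N)/\<rho>^n)) * K^n"
    using bound[of n] w C0 L rho by (intro mult_mono power_mono) auto
  also have "\<dots> \<le> (C * (\<Lambda>^N/\<rho>^n)) * K^n"
    using C0 L rho K0 by (intro mult_right_mono mult_left_mono divide_right_mono power_increasing) auto
  also have "\<dots> = C * \<Lambda>^N * (K/\<rho>)^n" by (simp add: power_divide)
  finally show ?thesis .
qed

lemma coef_summable:
  fixes c :: "nat \<Rightarrow> 'a::real_normed_field"
  assumes bound: "\<And>n. norm (c n) \<le> C * (\<Lambda>^(min n N)/\<rho>^n)" and C0: "C \<ge> 0" and L: "\<Lambda> \<ge> 1"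
    and rho: "\<rho> > 0" and w: "norm w < \<rho>"
  shows "summable (\<lambda>n. norm (c n * w^n))"
proof (rule summable_comparison_test')
  show "summable (\<lambda>n. C * \<Lambda>^N * (norm w/\<rho>)^n)"
    using w rho by (intro summable_mult summable_geometric) auto
  show "norm (norm (c n * w^n)) \<le> C * \<Lambda>^N * (norm w/\<rho>)^n" for n
    using term_bound[OF bound C0 L rho, of w "norm w" n] by simp
qed

lemma diffs4: "diffs (diffs (diffs (diffs c))) n = of_nat ((n+1)*(n+2)*(n+3)*(n+4)) * c (n+4)"
proof -
  have e: "n+4 = Suc (Suc (Suc (Suc n)))" "n+3 = Suc (Suc (Suc n))" "n+2 = Suc (Suc n)" "n+1 = Suc n" by simp_all
  show ?thesis unfolding e of_nat_mult by (simp only: diffs_def mult_ac)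
qed

lemma cube_sums:
  fixes c :: "nat \<Rightarrow> 'a::{real_normed_field,banach}"
  assumes sm: "summable (\<lambda>n. norm (c n * w^n))"
  shows "(\<lambda>n. cube c n * w^n) sums ((\<Sum>n. c n * w^n)^3)"
proof -
  define a where "a = (\<lambda>k. c k * w^k)"
  define b where "b = (\<lambda>m. \<Sum>j\<le>m. a j * a (m-j))"
  have sa: "summable (\<lambda>k. norm (a k))" using sm by (simp add: a_def)
  have bs: "b sums (suminf a * suminf a)" unfolding b_def by (rule Cauchy_product_sums[OF sa sa])
  have sb: "summable (\<lambda>k. norm (b k))"
  proof (rule summable_comparison_test')
    show "summable (\<lambda>k. \<Sum>i\<le>k. norm (a i) * norm (a (k-i)))"
      using summable_Cauchy_product[of "\<lambda>k. norm (a k)" "\<lambda>k. norm (a k)"] sa by simp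
    show "norm (norm (b n)) \<le> (\<Sum>i\<le>n. norm (a i) * norm (a (n-i)))" for n
    proof -
      have "norm (b n) \<le> (\<Sum>i\<le>n. norm (a i) * norm (a (n-i)))"
        unfolding b_def by (rule order_trans[OF norm_sum]) (simp add: norm_mult)
      then show ?thesis by simp
    qed
  qed
  have abs: "(\<lambda>k. \<Sum>i\<le>k. a i * b (k-i)) sums (suminf a * suminf b)"
    by (rule Cauchy_product_sums[OF sa sb])
  have eq: "(\<Sum>i\<le>k. a i * b (k-i)) = cube c k * w^k" for k
  proof -
    have "a i * b (k-i) = c i * (\<Sum>j\<le>k-i. c j * c (k-i-j)) * w^k" if "i \<le> k" for i
    proof -
      have "b (k-i) = (\<Sum>j\<le>k-i. c j * c (k-i-j) * w^(k-i))"
        unfolding b_def a_def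
      proof (rule sum.cong)
        fix j assume "j \<in> {..k-i}"
        then have h: "j + (k-i-j) = k-i" by simp
        then have "w^j * w^(k-i-j) = w^(k-i)" by (metis power_add)
        then show "c j * w^j * (c (k-i-j) * w^(k-i-j)) = c j * c (k-i-j) * w^(k-i)"
          by (metis (no_types, lifting) mult.assoc mult.left_commute)
      qed simp
      also have "\<dots> = (\<Sum>j\<le>k-i. c j * c (k-i-j)) * w^(k-i)" by (simp add: sum_distrib_right)
      finally have "a i * b (k-i) = c i * w^i * ((\<Sum>j\<le>k-i. c j * c (k-i-j)) * w^(k-i))"
        by (simp add: a_def)
      also have "\<dots> = c i * (\<Sum>j\<le>k-i. c j * c (k-i-j)) * (w^i * w^(k-i))" by (simp add: mult_ac)
      also have "w^i * w^(k-i) = w^k" using that by (simp flip: power_add)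
      finally show ?thesis .
    qed
    then have "(\<Sum>i\<le>k. a i * b (k-i)) = (\<Sum>i\<le>k. c i * (\<Sum>j\<le>k-i. c j * c (k-i-j)) * w^k)"
      by (intro sum.cong) auto
    also have "\<dots> = cube c k * w^k" unfolding cube_def by (simp add: sum_distrib_right)
    finally show ?thesis .
  qed
  have "suminf b = suminf a * suminf a" using bs sums_unique by metis
  then have "suminf a * suminf b = (\<Sum>n. c n * w^n)^3" by (simp add: a_def power3_eq_cube)
  then show ?thesis using abs eq by simp
qed

lemma shift_sums:
  fixes c :: "nat \<Rightarrow> 'a::{real_normed_field,banach}"
  assumes sm: "summable (\<lambda>n. c n * w^n)"
  shows "(\<lambda>n. (if n = 0 then 0 else c (n-1)) * w^n) sums (w * (\<Sum>n. c n * w^n))"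
proof -
  have "(\<lambda>n. w * (c n * w^n)) sums (w * (\<Sum>n. c n * w^n))"
    using sm by (intro sums_mult summable_sums)
  then have "(\<lambda>n. (\<lambda>n. (if n = 0 then 0 else c (n-1)) * w^n) (Suc n)) sums (w * (\<Sum>n. c n * w^n))"
    by (simp add: mult_ac)
  then have "(\<lambda>n. (if n = 0 then 0 else c (n-1)) * w^n) sums (w * (\<Sum>n. c n * w^n) + (if (0::nat) = 0 then 0 else c (0-1)) * w^0)"
    by (rule sums_Suc_iff[THEN iffD1])
  then show ?thesis by simp
qed

lemma series_ode:
  fixes c :: "nat \<Rightarrow> 'a::{real_normed_field,banach}"
  assumes sm: "summable (\<lambda>n. norm (c n * w^n))"
  and rec: "\<And>n. c (n+4) = -(cube c n + p * c n + (if n=0 then 0 else c (n-1))) / of_nat ((n+1)*(n+2)*(n+3)*(n+4))"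
  shows "(\<lambda>n. diffs (diffs (diffs (diffs c))) n * w^n) sums
     (-((\<Sum>n. c n * w^n)^3 + p*(\<Sum>n. c n*w^n) + w*(\<Sum>n. c n * w^n)))"
proof -
  have sm': "summable (\<lambda>n. c n * w^n)" by (rule summable_norm_cancel[OF sm])
  have e: "diffs (diffs (diffs (diffs c))) n * w^n
     = -(cube c n * w^n + p * (c n * w^n) + (if n=0 then 0 else c (n-1)) * w^n)" for n
  proof -
    have nz: "(of_nat ((n+1)*(n+2)*(n+3)*(n+4)) :: 'a) \<noteq> 0" by (simp del: of_nat_mult)
    define X where "X = cube c n + p * c n + (if n=0 then 0 else c (n-1))"
    have "diffs (diffs (diffs (diffs c))) n = of_nat ((n+1)*(n+2)*(n+3)*(n+4)) * (- X / of_nat ((n+1)*(n+2)*(n+3)*(n+4)))"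
      unfolding diffs4 rec X_def by (rule refl)
    also have "\<dots> = - X" by (metis nz nonzero_mult_div_cancel_left times_divide_eq_right) 
    finally have D: "diffs (diffs (diffs (diffs c))) n = - X" .
    show ?thesis unfolding D X_def by (simp only: distrib_right mult_minus_left mult.assoc)
  qed
  have "(\<lambda>n. -(cube c n * w^n + p * (c n * w^n) + (if n=0 then 0 else c (n-1)) * w^n)) sums
     (-((\<Sum>n. c n * w^n)^3 + p*(\<Sum>n. c n*w^n) + w*(\<Sum>n. c n * w^n)))"
  proof -
    have a: "(\<lambda>n. cube c n * w^n) sums ((\<Sum>n. c n * w^n)^3)" by (rule cube_sums[OF sm])
    have b: "(\<lambda>n. p * (c n * w^n)) sums (p*(\<Sum>n. c n*w^n))" by (rule sums_mult[OF summable_sums[OF sm']])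
    have d: "(\<lambda>n. (if n=0 then 0 else c (n-1)) * w^n) sums (w*(\<Sum>n. c n * w^n))" by (rule shift_sums[OF sm'])
    show ?thesis by (rule sums_minus[OF sums_add[OF sums_add[OF a b] d]])
  qed
  then show ?thesis by (simp only: e)
qed

lemma deriv_shift:
  fixes d :: "nat \<Rightarrow> real"
  assumes S: "\<And>x. norm x < \<rho> \<Longrightarrow> summable (\<lambda>n. d n * x^n)" and z: "\<bar>z - p\<bar> < \<rho>"
  shows "((\<lambda>z. \<Sum>n. d n * (z-p)^n) has_real_derivative (\<Sum>n. diffs d n * (z-p)^n)) (at z within I)"
proof -
  have a: "((\<lambda>w. \<Sum>n. d n * w^n) has_real_derivative (\<Sum>n. diffs d n * (z-p)^n)) (at (z-p))"
    by (rule termdiffs_strong'[of \<rho> d]) (use S z in auto)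
  have b: "((\<lambda>z. z - p) has_real_derivative 1) (at z)"
    using DERIV_diff[OF DERIV_ident DERIV_const] by simp
  have "((\<lambda>z. \<Sum>n. d n * (z-p)^n) has_real_derivative (\<Sum>n. diffs d n * (z-p)^n) * 1) (at z)"
    by (rule DERIV_chain2[OF a b])
  then show ?thesis by (simp add: has_field_derivative_at_within)
qed

lemma real_solution:
  fixes c :: "nat \<Rightarrow> real" and p \<rho> :: real and I :: "real set"
  assumes sm: "\<And>w. \<bar>w\<bar> < \<rho> \<Longrightarrow> summable (\<lambda>n. norm (c n * w^n))"
  and rec: "\<And>n. c (n+4) = -(cube c n + p * c n + (if n=0 then 0 else c (n-1))) / of_nat ((n+1)*(n+2)*(n+3)*(n+4))"
  and I: "\<And>z. z \<in> I \<Longrightarrow> \<bar>z - p\<bar> < \<rho>"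
  shows "solves_on (\<lambda>z. \<Sum>n. c n * (z-p)^n) (\<lambda>z. \<Sum>n. diffs c n * (z-p)^n)
     (\<lambda>z. \<Sum>n. diffs (diffs c) n * (z-p)^n) (\<lambda>z. \<Sum>n. diffs (diffs (diffs c)) n * (z-p)^n) I"
proof -
  have S0: "\<And>x. norm x < \<rho> \<Longrightarrow> summable (\<lambda>n. c n * x^n)"
  proof -
    fix x :: real assume "norm x < \<rho>"
    then have "summable (\<lambda>n. norm (c n * x^n))" using sm by simp
    then show "summable (\<lambda>n. c n * x^n)" by (rule summable_norm_cancel)
  qed
  have S1: "\<And>x. norm x < \<rho> \<Longrightarrow> summable (\<lambda>n. diffs c n * x^n)"
    by (rule termdiff_converges[OF _ S0])
  have S2: "\<And>x. norm x < \<rho> \<Longrightarrow> summable (\<lambda>n. diffs (diffs c) n * x^n)"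
    by (rule termdiff_converges[OF _ S1])
  have S3: "\<And>x. norm x < \<rho> \<Longrightarrow> summable (\<lambda>n. diffs (diffs (diffs c)) n * x^n)"
    by (rule termdiff_converges[OF _ S2])
  show ?thesis unfolding solves_on_def
  proof (intro ballI conjI)
    fix z assume z: "z \<in> I"
    have zp: "\<bar>z - p\<bar> < \<rho>" using I[OF z] .
    show "((\<lambda>z. \<Sum>n. c n * (z-p)^n) has_real_derivative (\<Sum>n. diffs c n * (z-p)^n)) (at z within I)"
      by (rule deriv_shift[OF S0 zp])
    show "((\<lambda>z. \<Sum>n. diffs c n * (z-p)^n) has_real_derivative (\<Sum>n. diffs (diffs c) n * (z-p)^n)) (at z within I)"
      by (rule deriv_shift[OF S1 zp])
    show "((\<lambda>z. \<Sum>n. diffs (diffs c) n * (z-p)^n) has_real_derivative (\<Sum>n. diffs (diffs (diffs c)) n * (z-p)^n)) (at z within I)"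
      by (rule deriv_shift[OF S2 zp])
    have d3: "((\<lambda>z. \<Sum>n. diffs (diffs (diffs c)) n * (z-p)^n) has_real_derivative (\<Sum>n. diffs (diffs (diffs (diffs c))) n * (z-p)^n)) (at z within I)"
      by (rule deriv_shift[OF S3 zp])
    define F where "F = (\<Sum>n. c n * (z-p)^n)"
    have "(\<lambda>n. diffs (diffs (diffs (diffs c))) n * (z-p)^n) sums (-(F^3 + p*F + (z-p)*F))"
      unfolding F_def by (rule series_ode[OF sm[OF zp] rec])
    then have "(\<Sum>n. diffs (diffs (diffs (diffs c))) n * (z-p)^n) = - F * (F^2 + z)"
      by (simp add: sums_iff algebra_simps power2_eq_square power3_eq_cube)
    then show "((\<lambda>z. \<Sum>n. diffs (diffs (diffs c)) n * (z-p)^n) has_real_derivative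
        (- (\<Sum>n. c n * (z-p)^n) * ((\<Sum>n. c n * (z-p)^n)\<^sup>2 + z))) (at z within I)"
      using d3 by (simp add: F_def)
  qed
qed

lemma init_vals:
  fixes c :: "nat \<Rightarrow> real"
  shows "(\<Sum>n. c n * (p-p)^n) = c 0" "(\<Sum>n. diffs c n * (p-p)^n) = c 1"
    "(\<Sum>n. diffs (diffs c) n * (p-p)^n) = 2 * c 2" "(\<Sum>n. diffs (diffs (diffs c)) n * (p-p)^n) = 6 * c 3"
  by (simp_all add: powser_zero diffs_def numeral_eq_Suc)

lemma coef_of_real:
  "coef (of_real p) (of_real d0) (of_real d1) (of_real d2) (of_real d3) n
     = (of_real (coef p d0 d1 d2 d3 n) :: 'a::real_normed_field)"
proof (induction n rule: less_induct)
  case (less n)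
  show ?case
  proof (cases "n < 4")
    case True
    then have "n = 0 \<or> n = 1 \<or> n = 2 \<or> n = 3" by auto
    then show ?thesis by (auto simp: coef_0 coef_1 coef_1[unfolded One_nat_def] coef_2 coef_3)
  next
    case False
    then obtain m where n: "n = m+4" by (metis add.commute le_Suc_ex not_less)
    have IH: "\<And>i. i \<le> m \<Longrightarrow> coef (of_real p) (of_real d0) (of_real d1) (of_real d2) (of_real d3) i
      = (of_real (coef p d0 d1 d2 d3 i) :: 'a)" using less n by simp
    have c: "cube (coef (of_real p) (of_real d0) (of_real d1) (of_real d2) (of_real d3)) m
       = (of_real (cube (coef p d0 d1 d2 d3) m) :: 'a)"
      unfolding cube_def of_real_sum of_real_mult
      by (intro sum.cong refl) (simp add: IH)
    show ?thesis unfolding n coef_4 c using IH[of m] IH[of "m-1"]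
      by (simp add: of_real_divide)
  qed
qed

lemma coef_holo:
  assumes "p holomorphic_on S" "d0 holomorphic_on S" "d1 holomorphic_on S" "d2 holomorphic_on S" "d3 holomorphic_on S"
  shows "(\<lambda>x. coef (p x) (d0 x) (d1 x) (d2 x) (d3 x) n) holomorphic_on S"
proof (induction n rule: less_induct)
  case (less n)
  show ?case
  proof (cases "n < 4")
    case True
    then have "n = 0 \<or> n = 1 \<or> n = 2 \<or> n = 3" by auto
    then show ?thesis using assms by (auto simp: coef_0 coef_1 coef_1[unfolded One_nat_def] coef_2 coef_3)
  next
    case False
    then obtain m where n: "n = m+4" by (metis add.commute le_Suc_ex not_less)
    have IH: "\<And>i. i \<le> m \<Longrightarrow> (\<lambda>x. coef (p x) (d0 x) (d1 x) (d2 x) (d3 x) i) holomorphic_on S"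
      using less n by simp
    have c: "(\<lambda>x. cube (coef (p x) (d0 x) (d1 x) (d2 x) (d3 x)) m) holomorphic_on S"
      unfolding cube_def
      by (intro holomorphic_on_sum holomorphic_on_mult IH) auto
    have pr: "(\<lambda>x. if m = 0 then 0 else coef (p x) (d0 x) (d1 x) (d2 x) (d3 x) (m-1)) holomorphic_on S"
      using IH[of "m-1"] by (cases "m = 0") auto
    show ?thesis unfolding n coef_4
      by (intro holomorphic_on_divide holomorphic_on_minus holomorphic_on_add holomorphic_on_mult
          c pr IH assms holomorphic_on_const) (auto simp del: of_nat_mult)
  qed
qed

lemma holo_near:
  fixes f :: "complex \<Rightarrow> complex"
  assumes "f holomorphic_on S" "open S" "x0 \<in> S" "e > 0"
  shows "\<exists>r>0. ball x0 r \<subseteq> S \<and> (\<forall>x\<in>ball x0 r. norm (f x - f x0) < e)"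
proof -
  have "isCont f x0"
    using assms holomorphic_on_imp_continuous_on continuous_on_eq_continuous_at by blast
  then obtain d where d: "d > 0" "\<And>x. dist x x0 < d \<Longrightarrow> dist (f x) (f x0) < e"
    using assms(4) unfolding continuous_at_eps_delta by metis
  obtain r0 where r0: "r0 > 0" "ball x0 r0 \<subseteq> S" using assms(2,3) openE by blast
  show ?thesis
  proof (intro exI[of _ "min d r0"] conjI ballI)
    show "min d r0 > 0" using d r0 by simp
    show "ball x0 (min d r0) \<subseteq> S" using r0 by auto
    fix x assume "x \<in> ball x0 (min d r0)"
    then have "dist x x0 < d" by (simp add: dist_commute)
    then show "norm (f x - f x0) < e" using d by (simp add: dist_norm)
  qed
qed

lemma holo_series:
  fixes tm :: "nat \<Rightarrow> complex \<Rightarrow> complex"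
  assumes S: "open S" and hol: "\<And>n. tm n holomorphic_on S"
    and h: "summable h" and b: "\<And>n x. x \<in> S \<Longrightarrow> norm (tm n x) \<le> h n"
  shows "\<exists>G. G holomorphic_on S \<and> (\<forall>x\<in>S. (\<lambda>n. tm n x) sums G x)"
proof -
  have d: "\<And>n x. x \<in> S \<Longrightarrow> (tm n has_field_derivative deriv (tm n) x) (at x)"
    using holomorphic_derivI[OF hol S] by blast
  have ev: "\<forall>\<^sub>F n in sequentially. \<forall>x\<in>S. norm (tm n x) \<le> h n"
    using b by (intro always_eventually) auto
  obtain g g' where g: "\<forall>x \<in> S. ((\<lambda>n. tm n x) sums g x) \<and> ((\<lambda>n. deriv (tm n) x) sums g' x) \<and> (g has_field_derivative g' x) (at x)"
    by (rule series_and_derivative_comparison[OF S h d ev])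
  have "g holomorphic_on S" unfolding holomorphic_on_def
  proof
    fix x assume "x \<in> S"
    then have "(g has_field_derivative g' x) (at x within S)"
      using g has_field_derivative_at_within by blast
    then show "g field_differentiable (at x within S)" unfolding field_differentiable_def by blast
  qed
  then show ?thesis using g by blast
qed

lemma analytic_from_holo:
  fixes G :: "complex \<Rightarrow> complex"
  assumes hol: "G holomorphic_on ball (of_real x0) r" and r: "r > 0"
    and eq: "\<And>y. \<bar>y - x0\<bar> < r \<Longrightarrow> Re (G (of_real y)) = f y"
  shows "real_analytic_at f x0"
  unfolding real_analytic_at_def
proof (intro exI[of _ r] conjI exI[of _ "\<lambda>n. Re ((deriv ^^ n) G (of_real x0) / fact n)"] allI impI r)
  fix y assume y: "\<bar>y - x0\<bar> < r"
  have "of_real y \<in> ball (of_real x0 :: complex) r" using y by (simp add: dist_norm abs_minus_commute flip: of_real_diff)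
  from holomorphic_power_series[OF hol this]
  have "(\<lambda>n. (deriv ^^ n) G (of_real x0) / fact n * (of_real y - of_real x0)^n) sums G (of_real y)" .
  then have "(\<lambda>n. Re ((deriv ^^ n) G (of_real x0) / fact n * (of_real y - of_real x0)^n)) sums Re (G (of_real y))"
    by (rule sums_Re)
  moreover have "Re ((deriv ^^ n) G (of_real x0) / fact n * (of_real y - of_real x0)^n)
      = Re ((deriv ^^ n) G (of_real x0) / fact n) * (y - x0)^n" for n
  proof -
    have "(of_real y - of_real x0 :: complex)^n = of_real ((y-x0)^n)" by simp
    moreover have "Re (z * of_real t) = Re z * t" for z t by simp
    ultimately show ?thesis by (simp only:)
  qed
  ultimately show "(\<lambda>n. Re ((deriv ^^ n) G (of_real x0) / fact n) * (y - x0)^n) sums f y"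
    using eq[OF y] by simp
qed

lemma analytic_part:
  fixes apC d0C d1C d2C d3C :: "complex \<Rightarrow> complex" and tr :: "real \<Rightarrow> nat \<Rightarrow> real"
  assumes hol: "apC holomorphic_on U" "d0C holomorphic_on U" "d1C holomorphic_on U"
      "d2C holomorphic_on U" "d3C holomorphic_on U"
  and U: "open U" "of_real \<delta>0 \<in> U" and \<delta>0: "\<delta>0 > 0"
  and rho: "\<rho> \<ge> 1" and Lam: "\<Lambda> \<ge> 1" and T1: "3*\<rho>^5*(\<alpha>+1) \<le> \<Lambda>" and T2: "3*\<rho>^5*(\<alpha>+1) \<le> real N"
  and Cs: "3*C^2*\<Lambda>^(3*N)*\<rho>^4 \<le> 1" and C0: "C > 0"
  and a0: "norm (apC (of_real \<delta>0)) + 1 \<le> \<alpha>"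
  and dd: "norm (d0C (of_real \<delta>0)) \<le> C/\<rho>^3/2" "norm (d1C (of_real \<delta>0)) \<le> C/\<rho>^3/2"
      "norm (d2C (of_real \<delta>0)) \<le> C/\<rho>^3/2" "norm (d3C (of_real \<delta>0)) \<le> C/\<rho>^3/2"
  and zz: "norm (of_real z - apC (of_real \<delta>0)) + 1 \<le> K" and K: "K < \<rho>"
  and agree: "\<And>y n. y > 0 \<Longrightarrow> of_real y \<in> U \<Longrightarrow>
     coef (apC (of_real y)) (d0C (of_real y)) (d1C (of_real y)) (d2C (of_real y)) (d3C (of_real y)) n
       * (of_real z - apC (of_real y))^n = of_real (tr y n)"
  shows "real_analytic_at (\<lambda>y. \<Sum>n. tr y n) \<delta>0"
proof -
  define x0 :: complex where "x0 = of_real \<delta>0"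
  define e where "e = C/\<rho>^3/2"
  have e0: "e > 0" using C0 rho by (simp add: e_def)
  obtain ra where ra: "ra > 0" "ball x0 ra \<subseteq> U" "\<forall>x\<in>ball x0 ra. norm (apC x - apC x0) < 1"
    using holo_near[OF hol(1) U(1) U(2)[folded x0_def], of 1] by auto
  obtain r0 where r0: "r0 > 0" "ball x0 r0 \<subseteq> U" "\<forall>x\<in>ball x0 r0. norm (d0C x - d0C x0) < e"
    using holo_near[OF hol(2) U(1) U(2)[folded x0_def] e0] by auto
  obtain r1 where r1: "r1 > 0" "ball x0 r1 \<subseteq> U" "\<forall>x\<in>ball x0 r1. norm (d1C x - d1C x0) < e"
    using holo_near[OF hol(3) U(1) U(2)[folded x0_def] e0] by auto
  obtain r2 where r2: "r2 > 0" "ball x0 r2 \<subseteq> U" "\<forall>x\<in>ball x0 r2. norm (d2C x - d2C x0) < e"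
    using holo_near[OF hol(4) U(1) U(2)[folded x0_def] e0] by auto
  obtain r3 where r3: "r3 > 0" "ball x0 r3 \<subseteq> U" "\<forall>x\<in>ball x0 r3. norm (d3C x - d3C x0) < e"
    using holo_near[OF hol(5) U(1) U(2)[folded x0_def] e0] by auto
  define r where "r = min (min ra (min r0 (min r1 (min r2 r3)))) \<delta>0"
  have r: "r > 0" using ra r0 r1 r2 r3 \<delta>0 by (simp add: r_def)
  define S where "S = ball x0 r"
  have SU: "S \<subseteq> U" using ra unfolding S_def r_def by auto
  have inS: "x \<in> ball x0 ra" "x \<in> ball x0 r0" "x \<in> ball x0 r1" "x \<in> ball x0 r2" "x \<in> ball x0 r3"
    if "x \<in> S" for x using that unfolding S_def r_def by auto
  have dbound: "norm (dC x) \<le> C/\<rho>^3" if "x \<in> S" "norm (dC x0) \<le> e" "norm (dC x - dC x0) < e" for dC x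
  proof -
    have "norm (dC x) \<le> norm (dC x0) + norm (dC x - dC x0)" by (rule norm_triangle_sub)
    also have "\<dots> \<le> 2*e" using that by simp
    finally show ?thesis by (simp add: e_def)
  qed
  define tm where "tm = (\<lambda>n x. coef (apC x) (d0C x) (d1C x) (d2C x) (d3C x) n * (of_real z - apC x)^n)"
  have tb: "norm (tm n x) \<le> C * \<Lambda>^N * (K/\<rho>)^n" if x: "x \<in> S" for n x
  proof -
    have pa: "norm (apC x) \<le> \<alpha>"
    proof -
      have "norm (apC x) \<le> norm (apC x0) + norm (apC x - apC x0)" by (rule norm_triangle_sub)
      also have "\<dots> \<le> \<alpha>" using ra(3) inS(1)[OF x] a0 unfolding x0_def by force
      finally show ?thesis .
    qed
    have pz: "norm (of_real z - apC x) \<le> K"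
    proof -
      have "norm (of_real z - apC x) \<le> norm (of_real z - apC x0) + norm (apC x - apC x0)"
        by (metis diff_add_cancel norm_triangle_ineq4 add_diff_eq diff_diff_eq2)
      also have "\<dots> \<le> K" using ra(3) inS(1)[OF x] zz unfolding x0_def by force
      finally show ?thesis .
    qed
    have cb: "norm (coef (apC x) (d0C x) (d1C x) (d2C x) (d3C x) n) \<le> C * (\<Lambda>^(min n N) / \<rho>^n)" for n
      by (rule coef_bound[OF rho Lam pa T1 T2 Cs less_imp_le[OF C0]])
        (use dbound[OF x, of d0C] dbound[OF x, of d1C] dbound[OF x, of d2C] dbound[OF x, of d3C]
             dd r0(3) r1(3) r2(3) r3(3) inS[OF x] in \<open>auto simp: e_def x0_def\<close>)
    show ?thesis unfolding tm_def
      by (rule term_bound[OF cb less_imp_le[OF C0] Lam _ pz]) (use rho in simp)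
  qed
  have tholo: "tm n holomorphic_on S" for n
  proof -
    have h: "apC holomorphic_on S" "d0C holomorphic_on S" "d1C holomorphic_on S"
      "d2C holomorphic_on S" "d3C holomorphic_on S" using hol SU holomorphic_on_subset by blast+
    show ?thesis unfolding tm_def
      by (intro holomorphic_on_mult holomorphic_on_power holomorphic_on_diff holomorphic_on_const
           coef_holo h)
  qed
  have hs: "summable (\<lambda>n. C * \<Lambda>^N * (K/\<rho>)^n)"
  proof -
    have "K \<ge> 0" using zz by (smt (verit) norm_ge_zero)
    then show ?thesis using K rho by (intro summable_mult summable_geometric) auto
  qed
  obtain G where G: "G holomorphic_on S" "\<forall>x\<in>S. (\<lambda>n. tm n x) sums G x"
    using holo_series[OF _ tholo hs tb] unfolding S_def by auto
  show ?thesis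
  proof (rule analytic_from_holo[OF G(1)[unfolded S_def x0_def] r])
    fix y assume y: "\<bar>y - \<delta>0\<bar> < r"
    have ypos: "y > 0" using y unfolding r_def by linarith
    have yS: "of_real y \<in> S" using y unfolding S_def x0_def
      by (simp add: dist_norm abs_minus_commute flip: of_real_diff)
    have "(\<lambda>n. tm n (of_real y)) sums G (of_real y)" using G(2) yS by blast
    moreover have "tm n (of_real y) = of_real (tr y n)" for n
      unfolding tm_def by (rule agree[OF ypos]) (use yS SU in auto)
    ultimately have "(\<lambda>n. of_real (tr y n) :: complex) sums G (of_real y)" by simp
    then have "(\<lambda>n. Re (of_real (tr y n) :: complex)) sums Re (G (of_real y))" by (rule sums_Re)
    then have "(\<lambda>n. tr y n) sums Re (G (of_real y))" by simp
    then show "Re (G (of_real y)) = (\<Sum>n. tr y n)" by (simp add: sums_iff)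
  qed
qed

lemma solve_part:
  fixes ap am d0 d1 d2 d3 :: real
  assumes rho: "\<rho> \<ge> 1" and Lam: "\<Lambda> \<ge> 1" and T1: "3*\<rho>^5*(\<alpha>+1) \<le> \<Lambda>" and T2: "3*\<rho>^5*(\<alpha>+1) \<le> real N"
  and Cs: "3*C^2*\<Lambda>^(3*N)*\<rho>^4 \<le> 1" and C0: "C \<ge> 0"
  and ap: "0 < ap" "ap \<le> \<alpha>" and am: "0 \<le> am" "ap + am < \<rho>"
  and dd: "\<bar>d0\<bar> \<le> C/\<rho>^3" "\<bar>d1\<bar> \<le> C/\<rho>^3" "\<bar>d2\<bar> \<le> C/\<rho>^3" "\<bar>d3\<bar> \<le> C/\<rho>^3"
  shows "solves_on (\<lambda>z. \<Sum>n. coef ap d0 d1 d2 d3 n * (z-ap)^n)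
     (\<lambda>z. \<Sum>n. diffs (coef ap d0 d1 d2 d3) n * (z-ap)^n)
     (\<lambda>z. \<Sum>n. diffs (diffs (coef ap d0 d1 d2 d3)) n * (z-ap)^n)
     (\<lambda>z. \<Sum>n. diffs (diffs (diffs (coef ap d0 d1 d2 d3))) n * (z-ap)^n) {-am..ap}"
proof (rule real_solution)
  have pa: "norm ap \<le> \<alpha>" using ap by simp
  have cb: "norm (coef ap d0 d1 d2 d3 n) \<le> C * (\<Lambda>^(min n N) / \<rho>^n)" for n
    by (rule coef_bound[OF rho Lam pa T1 T2 Cs C0]) (use dd in auto)
  show "summable (\<lambda>n. norm (coef ap d0 d1 d2 d3 n * w^n))" if "\<bar>w\<bar> < \<rho>" for w
    by (rule coef_summable[OF cb C0 Lam]) (use rho that in auto)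
  show "coef ap d0 d1 d2 d3 (n+4) = -(cube (coef ap d0 d1 d2 d3) n + ap * coef ap d0 d1 d2 d3 n
     + (if n=0 then 0 else coef ap d0 d1 d2 d3 (n-1))) / of_nat ((n+1)*(n+2)*(n+3)*(n+4))" for n
    by (rule coef_4)
  show "\<bar>z - ap\<bar> < \<rho>" if "z \<in> {-am..ap}" for z using that am by auto
qed

lemma a_scale_pos: "\<delta> > 0 \<Longrightarrow> \<nu> > 0 \<Longrightarrow> a_scale \<delta> \<nu> > 0"
proof -
  assume "\<delta> > 0" "\<nu> > 0"
  then have "(1 + \<delta>^2) * \<delta> / (8*\<nu>^2) > 0" by (simp add: add_pos_nonneg)
  then show ?thesis unfolding a_scale_def by (metis powr_gt_zero less_irrefl)
qed

lemma a_scale_le: assumes "0 < \<delta>" "\<delta> \<le> 1" "\<nu> > 0" shows "a_scale \<delta> \<nu> \<le> a_scale 1 \<nu>"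
proof -
  have "\<delta>^2 \<le> 1" using assms by (simp add: power_le_one)
  then have "(1 + \<delta>^2) * \<delta> \<le> 2 * 1" using assms by (intro mult_mono) auto
  then have "(1 + \<delta>^2) * \<delta> / (8*\<nu>^2) \<le> (1 + 1^2) * 1 / (8*\<nu>^2)" using assms
    by (intro divide_right_mono) auto
  then show ?thesis unfolding a_scale_def using assms
    by (intro powr_mono2) (auto intro!: divide_nonneg_pos mult_nonneg_nonneg)
qed

lemma powr_le_sq: fixes a M s :: real
  assumes "0 < a" "a \<le> M" "1 \<le> M" "0 \<le> s" "s \<le> 2" shows "a powr s \<le> M^2"
proof -
  have "a powr s \<le> M powr s" using assms by (intro powr_mono2) auto
  also have "\<dots> \<le> M powr 2" using assms by (intro powr_mono) auto
  also have "\<dots> = M^2" using assms by (simp add: powr_numeral)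
  finally show ?thesis .
qed

lemma data_bounds: fixes a M k x10 x20 :: real
  assumes a: "0 < a" "a \<le> M" "1 \<le> M" and x: "\<bar>x10\<bar> \<le> k" "\<bar>x20\<bar> \<le> k"
  shows "\<bar>a powr (1/2) * x10\<bar> \<le> 2*M^2*k"
    "\<bar>- (a powr (3/4) / sqrt 2) * (x10 + x20)\<bar> \<le> 2*M^2*k"
    "\<bar>a * x20 / 2\<bar> \<le> 2*M^2*k"
    "\<bar>(a powr (5/4) / sqrt 2) * (x10 - x20) / 6\<bar> \<le> 2*M^2*k"
proof -
  have k: "k \<ge> 0" using x by linarith
  have M2: "M \<le> M^2" using a by (simp add: power2_eq_square)
  have s2: "sqrt 2 \<ge> 1" by simp
  have p1: "a powr (1/2) \<le> M^2" and p3: "a powr (3/4) \<le> M^2" and p5: "a powr (5/4) \<le> M^2"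
    using powr_le_sq[OF a] by auto
  have s: "\<bar>x10 + x20\<bar> \<le> 2*k" "\<bar>x10 - x20\<bar> \<le> 2*k" using x by auto
  have "\<bar>a powr (1/2) * x10\<bar> = a powr (1/2) * \<bar>x10\<bar>" by (simp add: abs_mult)
  also have "\<dots> \<le> M^2 * k" using p1 x k by (intro mult_mono) auto
  also have "\<dots> \<le> 2*M^2*k" using k by (simp add: mult_right_mono)
  finally show "\<bar>a powr (1/2) * x10\<bar> \<le> 2*M^2*k" .
  have "\<bar>- (a powr (3/4) / sqrt 2) * (x10 + x20)\<bar> = a powr (3/4) / sqrt 2 * \<bar>x10 + x20\<bar>" by (simp add: abs_mult)
  also have "\<dots> \<le> a powr (3/4) * \<bar>x10 + x20\<bar>" using s2
    by (intro mult_right_mono) (auto simp: divide_le_eq mult_le_cancel_left1 intro: order_trans)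
  also have "\<dots> \<le> M^2 * (2*k)" using p3 s k by (intro mult_mono) auto
  finally show "\<bar>- (a powr (3/4) / sqrt 2) * (x10 + x20)\<bar> \<le> 2*M^2*k" by simp
  have "\<bar>a * x20 / 2\<bar> \<le> a * \<bar>x20\<bar>" using a by (simp add: abs_mult)
  also have "\<dots> \<le> M^2 * k" using a M2 x k by (intro mult_mono) auto
  also have "\<dots> \<le> 2*M^2*k" using k by (simp add: mult_right_mono)
  finally show "\<bar>a * x20 / 2\<bar> \<le> 2*M^2*k" .
  have "\<bar>(a powr (5/4) / sqrt 2) * (x10 - x20) / 6\<bar> = (a powr (5/4) / sqrt 2 * \<bar>x10 - x20\<bar>) / 6"
    by (simp add: abs_mult)
  also have "\<dots> \<le> a powr (5/4) / sqrt 2 * \<bar>x10 - x20\<bar>"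
  proof -
    have "0 \<le> a powr (5/4) / sqrt 2 * \<bar>x10 - x20\<bar>" by simp
    moreover have "\<And>t::real. 0 \<le> t \<Longrightarrow> t/6 \<le> t" by simp
    ultimately show ?thesis by blast
  qed
  also have "\<dots> \<le> a powr (5/4) * \<bar>x10 - x20\<bar>" using s2
    by (intro mult_right_mono) (auto simp: divide_le_eq mult_le_cancel_left1 intro: order_trans)
  also have "\<dots> \<le> M^2 * (2*k)" using p5 s k by (intro mult_mono) auto
  finally show "\<bar>(a powr (5/4) / sqrt 2) * (x10 - x20) / 6\<bar> \<le> 2*M^2*k" by simp
qed

lemma near_pos_notin:
  fixes u :: complex
  assumes "norm (u - of_real b) < b"
  shows "u \<notin> \<real>\<^sub>\<le>\<^sub>0"
proof -
  have "\<bar>Re (u - of_real b)\<bar> \<le> cmod (u - of_real b)" by (rule abs_Re_le_cmod)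
  then have "Re u > 0" using assms by simp
  then show ?thesis by (simp add: complex_nonpos_Reals_iff)
qed

lemma diffs_zero:
  fixes c :: "nat \<Rightarrow> real"
  shows "diffs c 0 = c 1" "diffs (diffs c) 0 = 2 * c 2" "diffs (diffs (diffs c)) 0 = 6 * c 3"
  by (simp_all add: diffs_def numeral_eq_Suc)

theorem lemma12:
  fixes \<nu>m \<nu>p :: real
  assumes "\<nu>m > 0" and "\<nu>p > 0"
  shows "\<exists>k1>0. \<forall>x10 x20 :: real. norm (x10, x20) \<le> k1 \<longrightarrow>
    (\<exists>A :: real \<Rightarrow> real \<Rightarrow> real.
      (\<forall>\<delta>\<in>{1/3..1}.
         let ap = a_scale \<delta> \<nu>p; am = a_scale \<delta> \<nu>m in
         \<exists>A1 A2 A3. solves_on (A \<delta>) A1 A2 A3 {-am..ap}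
           \<and> A \<delta> ap = ap powr (1/2) * x10
           \<and> A1 ap = - (ap powr (3/4) / sqrt 2) * (x10 + x20)
           \<and> A2 ap = ap * x20
           \<and> A3 ap = (ap powr (5/4) / sqrt 2) * (x10 - x20))
      \<and> (\<forall>\<delta>0\<in>{1/3..1}. \<forall>z\<in>{- a_scale \<delta>0 \<nu>m .. a_scale \<delta>0 \<nu>p}.
           real_analytic_at (\<lambda>\<delta>. A \<delta> z) \<delta>0))"
proof -
  define P where "P = a_scale 1 \<nu>p"
  define Q where "Q = a_scale 1 \<nu>m"
  have P0: "P > 0" "Q > 0" using a_scale_pos assms unfolding P_def Q_def by auto
  define \<alpha> where "\<alpha> = P + 1"
  define \<rho> where "\<rho> = P + Q + 2"
  define K where "K = P + Q + 1"
  define T where "T = 3*\<rho>^5*(\<alpha>+1)"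
  define \<Lambda> where "\<Lambda> = T"
  define N where "N = nat \<lceil>T\<rceil>"
  define C where "C = 1/(3*\<Lambda>^(3*N)*\<rho>^4)"
  define M where "M = max 1 P"
  define k1 where "k1 = C/\<rho>^3/2/(2*M^2)"
  have rho: "\<rho> \<ge> 1" using P0 by (simp add: \<rho>_def)
  have T0: "T \<ge> 1"
  proof -
    have "\<rho>^5 \<ge> 1" using rho by (simp add: one_le_power)
    moreover have "\<alpha> + 1 \<ge> 1" using P0 by (simp add: \<alpha>_def)
    ultimately have "1 \<le> \<rho>^5*(\<alpha>+1)" by (metis mult_mono one_le_mult_iff order.trans zero_le_one mult_1)
    then show ?thesis unfolding T_def by linarith
  qed
  have Lam: "\<Lambda> \<ge> 1" using T0 by (simp add: \<Lambda>_def)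
  have T1: "3*\<rho>^5*(\<alpha>+1) \<le> \<Lambda>" by (simp add: \<Lambda>_def T_def)
  have T2: "3*\<rho>^5*(\<alpha>+1) \<le> real N" unfolding N_def T_def[symmetric] by (rule real_nat_ceiling_ge)
  have den: "3*\<Lambda>^(3*N)*\<rho>^4 \<ge> 1"
  proof -
    have "\<Lambda>^(3*N) \<ge> 1" "\<rho>^4 \<ge> 1" using Lam rho by (simp_all add: one_le_power)
    then have "1 \<le> \<Lambda>^(3*N)*\<rho>^4" by (metis mult_mono order.trans zero_le_one mult_1)
    then show ?thesis by linarith
  qed
  have Cpos: "C > 0" unfolding C_def using den by (metis divide_pos_pos zero_less_one less_le_trans)
  have C0: "C \<ge> 0" using Cpos by simp
  have Cs: "3*C^2*\<Lambda>^(3*N)*\<rho>^4 \<le> 1"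
  proof -
    have "3*C^2*\<Lambda>^(3*N)*\<rho>^4 = C * (C * (3*\<Lambda>^(3*N)*\<rho>^4))" by (simp add: power2_eq_square mult_ac)
    also have "C * (3*\<Lambda>^(3*N)*\<rho>^4) = 1" using den Lam rho by (simp add: C_def)
    also have "C * 1 \<le> 1"
    proof -
      have g: "\<And>t::real. 1 \<le> t \<Longrightarrow> 1/t \<le> 1" by simp
      show ?thesis using g[OF den] unfolding C_def by simp
    qed
    finally show ?thesis .
  qed
  have M1: "M \<ge> 1" "P \<le> M" by (simp_all add: M_def)
  have k1pos: "k1 > 0" using Cpos rho M1 by (simp add: k1_def)
  have k1eq: "2*M^2*k1 = C/\<rho>^3/2" using M1 by (simp add: k1_def)
  have apP: "0 < a_scale \<delta> \<nu>p" "a_scale \<delta> \<nu>p \<le> P" if "\<delta> \<in> {1/3..1}" for \<delta>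
    using that a_scale_pos[of \<delta> \<nu>p] a_scale_le[of \<delta> \<nu>p] assms by (auto simp: P_def)
  have amQ: "0 < a_scale \<delta> \<nu>m" "a_scale \<delta> \<nu>m \<le> Q" if "\<delta> \<in> {1/3..1}" for \<delta>
    using that a_scale_pos[of \<delta> \<nu>m] a_scale_le[of \<delta> \<nu>m] assms by (auto simp: Q_def)
  show ?thesis
  proof (intro exI[of _ k1] conjI allI impI k1pos)
    fix x10 x20 :: real assume nx: "norm (x10, x20) \<le> k1"
    have x: "\<bar>x10\<bar> \<le> k1" "\<bar>x20\<bar> \<le> k1"
      using norm_fst_le[of x10 x20] norm_snd_le[of x20 x10] nx by auto
    define ap where "ap = (\<lambda>\<delta>. a_scale \<delta> \<nu>p)"
    define d0 where "d0 = (\<lambda>\<delta>. ap \<delta> powr (1/2) * x10)"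
    define d1 where "d1 = (\<lambda>\<delta>. - (ap \<delta> powr (3/4) / sqrt 2) * (x10 + x20))"
    define d2 where "d2 = (\<lambda>\<delta>. ap \<delta> * x20 / 2)"
    define d3 where "d3 = (\<lambda>\<delta>. (ap \<delta> powr (5/4) / sqrt 2) * (x10 - x20) / 6)"
    define cR where "cR = (\<lambda>\<delta>. coef (ap \<delta>) (d0 \<delta>) (d1 \<delta>) (d2 \<delta>) (d3 \<delta>))"
    define A where "A = (\<lambda>\<delta> z. \<Sum>n. cR \<delta> n * (z - ap \<delta>)^n)"
    have dbnd: "\<bar>d0 \<delta>\<bar> \<le> C/\<rho>^3/2" "\<bar>d1 \<delta>\<bar> \<le> C/\<rho>^3/2" "\<bar>d2 \<delta>\<bar> \<le> C/\<rho>^3/2" "\<bar>d3 \<delta>\<bar> \<le> C/\<rho>^3/2"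
      if "\<delta> \<in> {1/3..1}" for \<delta>
      using data_bounds[OF apP(1)[OF that] order_trans[OF apP(2)[OF that] M1(2)] M1(1) x]
      unfolding k1eq d0_def d1_def d2_def d3_def ap_def by auto
    show "\<exists>A :: real \<Rightarrow> real \<Rightarrow> real.
      (\<forall>\<delta>\<in>{1/3..1}.
         let ap = a_scale \<delta> \<nu>p; am = a_scale \<delta> \<nu>m in
         \<exists>A1 A2 A3. solves_on (A \<delta>) A1 A2 A3 {-am..ap}
           \<and> A \<delta> ap = ap powr (1/2) * x10
           \<and> A1 ap = - (ap powr (3/4) / sqrt 2) * (x10 + x20)
           \<and> A2 ap = ap * x20
           \<and> A3 ap = (ap powr (5/4) / sqrt 2) * (x10 - x20))
      \<and> (\<forall>\<delta>0\<in>{1/3..1}. \<forall>z\<in>{- a_scale \<delta>0 \<nu>m .. a_scale \<delta>0 \<nu>p}.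
           real_analytic_at (\<lambda>\<delta>. A \<delta> z) \<delta>0)"
    proof (intro exI[of _ A] conjI ballI)
      fix \<delta> :: real assume \<delta>: "\<delta> \<in> {1/3..1}"
      have sol: "solves_on (A \<delta>) (\<lambda>z. \<Sum>n. diffs (cR \<delta>) n * (z - ap \<delta>)^n)
         (\<lambda>z. \<Sum>n. diffs (diffs (cR \<delta>)) n * (z - ap \<delta>)^n)
         (\<lambda>z. \<Sum>n. diffs (diffs (diffs (cR \<delta>))) n * (z - ap \<delta>)^n) {-a_scale \<delta> \<nu>m..ap \<delta>}"
        unfolding A_def cR_def
      proof (rule solve_part[OF rho Lam T1 T2 Cs C0])
        show "0 < ap \<delta>" "ap \<delta> \<le> \<alpha>" using apP[OF \<delta>] by (auto simp: ap_def \<alpha>_def)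
        show "0 \<le> a_scale \<delta> \<nu>m" using amQ[OF \<delta>] by simp
        show "ap \<delta> + a_scale \<delta> \<nu>m < \<rho>" using apP[OF \<delta>] amQ[OF \<delta>] by (auto simp: ap_def \<rho>_def)
        show "\<bar>d0 \<delta>\<bar> \<le> C/\<rho>^3" "\<bar>d1 \<delta>\<bar> \<le> C/\<rho>^3" "\<bar>d2 \<delta>\<bar> \<le> C/\<rho>^3" "\<bar>d3 \<delta>\<bar> \<le> C/\<rho>^3"
          using dbnd[OF \<delta>] Cpos rho by (auto intro: order_trans)
      qed
      have v: "A \<delta> (ap \<delta>) = d0 \<delta>"
        "(\<Sum>n. diffs (cR \<delta>) n * (ap \<delta> - ap \<delta>)^n) = d1 \<delta>"
        "(\<Sum>n. diffs (diffs (cR \<delta>)) n * (ap \<delta> - ap \<delta>)^n) = 2 * d2 \<delta>"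
        "(\<Sum>n. diffs (diffs (diffs (cR \<delta>))) n * (ap \<delta> - ap \<delta>)^n) = 6 * d3 \<delta>"
        unfolding A_def
        by (subst init_vals, simp only: cR_def coef_0 coef_1 coef_2 coef_3)+
      show "let ap = a_scale \<delta> \<nu>p; am = a_scale \<delta> \<nu>m in
         \<exists>A1 A2 A3. solves_on (A \<delta>) A1 A2 A3 {-am..ap}
           \<and> A \<delta> ap = ap powr (1/2) * x10
           \<and> A1 ap = - (ap powr (3/4) / sqrt 2) * (x10 + x20)
           \<and> A2 ap = ap * x20
           \<and> A3 ap = (ap powr (5/4) / sqrt 2) * (x10 - x20)"
        unfolding Let_def
        apply (rule exI[of _ "\<lambda>z. \<Sum>n. diffs (cR \<delta>) n * (z - ap \<delta>)^n"],
             rule exI[of _ "\<lambda>z. \<Sum>n. diffs (diffs (cR \<delta>)) n * (z - ap \<delta>)^n"],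
             rule exI[of _ "\<lambda>z. \<Sum>n. diffs (diffs (diffs (cR \<delta>))) n * (z - ap \<delta>)^n"])
        apply (intro conjI)
        using sol v by (simp_all add: ap_def d0_def d1_def d2_def d3_def)
    next
      fix \<delta>0 z :: real assume \<delta>0: "\<delta>0 \<in> {1/3..1}" and z: "z \<in> {- a_scale \<delta>0 \<nu>m .. a_scale \<delta>0 \<nu>p}"
      define baseC where "baseC = (\<lambda>x::complex. (1 + x^2) * x / (8 * of_real (\<nu>p^2)))"
      define apC where "apC = (\<lambda>x. baseC x powr of_real (2/5))"
      define dC0 where "dC0 = (\<lambda>x. apC x powr of_real (1/2) * of_real x10)"
      define dC1 where "dC1 = (\<lambda>x. - (apC x powr of_real (3/4) / of_real (sqrt 2)) * (of_real x10 + of_real x20))"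
      define dC2 where "dC2 = (\<lambda>x. apC x * of_real x20 / 2)"
      define dC3 where "dC3 = (\<lambda>x. (apC x powr of_real (5/4) / of_real (sqrt 2)) * (of_real x10 - of_real x20) / 6)"
      define tr where "tr = (\<lambda>y n. cR y n * (z - ap y)^n)"
      have baseR: "baseC (of_real y) = of_real ((1 + y^2) * y / (8 * \<nu>p^2))" for y
        by (simp add: baseC_def)
      have apR: "apC (of_real y) = of_real (ap y)" if "y > 0" for y
      proof -
        have "(1 + y^2) * y / (8 * \<nu>p^2) \<ge> 0" using that by (simp add: add_pos_nonneg less_imp_le)
        then show ?thesis unfolding apC_def baseR ap_def a_scale_def by (rule powr_of_real)
      qed
      have apnn: "ap y \<ge> 0" for y unfolding ap_def a_scale_def by simp
      have dR: "dC0 (of_real y) = of_real (d0 y)" "dC1 (of_real y) = of_real (d1 y)"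
        "dC2 (of_real y) = of_real (d2 y)" "dC3 (of_real y) = of_real (d3 y)" if "y > 0" for y
        unfolding dC0_def dC1_def dC2_def dC3_def d0_def d1_def d2_def d3_def apR[OF that]
          powr_of_real[OF apnn] by simp_all
      define b0 where "b0 = (1 + \<delta>0^2) * \<delta>0 / (8 * \<nu>p^2)"
      have b0: "b0 > 0" using \<delta>0 assms by (simp add: b0_def add_pos_nonneg)
      have bholo: "baseC holomorphic_on UNIV" unfolding baseC_def using assms
        by (intro holomorphic_intros) auto
      obtain r1 where r1: "r1 > 0" "ball (of_real \<delta>0 :: complex) r1 \<subseteq> UNIV"
          "\<forall>x\<in>ball (of_real \<delta>0) r1. norm (baseC x - baseC (of_real \<delta>0)) < b0"
        using holo_near[of baseC UNIV "of_real \<delta>0" b0, OF bholo open_UNIV UNIV_I b0] by auto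
      have bnot: "baseC x \<notin> \<real>\<^sub>\<le>\<^sub>0" if "x \<in> ball (of_real \<delta>0) r1" for x
        using r1(3) that near_pos_notin[of "baseC x" b0] by (simp add: baseR b0_def)
      have aholo: "apC holomorphic_on ball (of_real \<delta>0) r1" unfolding apC_def
        by (intro holomorphic_on_powr holomorphic_on_const holomorphic_on_subset[OF bholo] bnot) auto
      define ap0 where "ap0 = ap \<delta>0"
      have ap0: "ap0 > 0" "ap0 \<le> P" using apP[OF \<delta>0] by (simp_all add: ap0_def ap_def)
      have apC0: "apC (of_real \<delta>0) = of_real ap0" using apR[of \<delta>0] \<delta>0 by (simp add: ap0_def)
      obtain r2 where r2: "r2 > 0" "ball (of_real \<delta>0 :: complex) r2 \<subseteq> ball (of_real \<delta>0) r1"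
          "\<forall>x\<in>ball (of_real \<delta>0) r2. norm (apC x - apC (of_real \<delta>0)) < ap0"
        using holo_near[OF aholo open_ball centre_in_ball[THEN iffD2, OF r1(1)] ap0(1)] by auto
      have anot: "apC x \<notin> \<real>\<^sub>\<le>\<^sub>0" if "x \<in> ball (of_real \<delta>0) r2" for x
        using r2(3) that near_pos_notin[of "apC x" ap0] by (simp add: apC0)
      have aholo2: "apC holomorphic_on ball (of_real \<delta>0) r2" using aholo r2(2) holomorphic_on_subset by blast
      have dholo: "dC0 holomorphic_on ball (of_real \<delta>0) r2" "dC1 holomorphic_on ball (of_real \<delta>0) r2"
          "dC2 holomorphic_on ball (of_real \<delta>0) r2" "dC3 holomorphic_on ball (of_real \<delta>0) r2"
        unfolding dC0_def dC1_def dC2_def dC3_def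
        by (intro holomorphic_on_powr holomorphic_on_mult holomorphic_on_divide holomorphic_on_minus
            holomorphic_on_const aholo2 anot; simp)+
      have "real_analytic_at (\<lambda>y. \<Sum>n. tr y n) \<delta>0"
      proof (rule analytic_part[OF aholo2 dholo open_ball _ _ rho Lam T1 T2 Cs Cpos])
        show "of_real \<delta>0 \<in> ball (of_real \<delta>0 :: complex) r2" using r2(1) by simp
        show "\<delta>0 > 0" using \<delta>0 by simp
        show "norm (apC (of_real \<delta>0)) + 1 \<le> \<alpha>" using ap0 by (simp add: apC0 \<alpha>_def)
        show "norm (dC0 (of_real \<delta>0)) \<le> C/\<rho>^3/2" "norm (dC1 (of_real \<delta>0)) \<le> C/\<rho>^3/2"
          "norm (dC2 (of_real \<delta>0)) \<le> C/\<rho>^3/2" "norm (dC3 (of_real \<delta>0)) \<le> C/\<rho>^3/2"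
          using dR[of \<delta>0] dbnd[OF \<delta>0] \<delta>0 by simp_all
        show "norm (of_real z - apC (of_real \<delta>0)) + 1 \<le> K"
        proof -
          have "norm (of_real z - apC (of_real \<delta>0)) = \<bar>z - ap0\<bar>"
            unfolding apC0 by (simp flip: of_real_diff)
          also have "\<dots> \<le> P + Q" using z amQ[OF \<delta>0] ap0 unfolding ap0_def ap_def by auto
          finally show ?thesis by (simp add: K_def)
        qed
        show "K < \<rho>" by (simp add: K_def \<rho>_def)
        show "coef (apC (of_real y)) (dC0 (of_real y)) (dC1 (of_real y)) (dC2 (of_real y)) (dC3 (of_real y)) n
           * (of_real z - apC (of_real y))^n = of_real (tr y n)" if "y > 0" for y n
          unfolding apR[OF that] dR[OF that] coef_of_real tr_def cR_def by simp
      qed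
      then show "real_analytic_at (\<lambda>\<delta>. A \<delta> z) \<delta>0" by (simp add: A_def tr_def)
    qed
  qed
qed

end
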